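(* For the $n$-dimensional rigid body with a flat face rubber-rolling on a sphere (as in the context), with $n\ge3$, the gyroscopic coefficients in the coordinates $(s_1,\dots,s_{n-1})$ on $S=\mathbb R^{n-1}$ are: (C1) if $\mathbb J=\mathrm{diag}(J_1,J_2,\dots,J_n)$ and $a=0$, then $C_{ij}^k=0$ for all $i,j,k\in\{1,\dots,n-1\}$; (C2) if $\mathbb J=\mathrm{diag}(J_1,\dots,J_1,J_n)$, then $$C_{ij}^k=\frac{-ma}{R(J_1+J_n+ma^2)}\big(s_i\delta_j^k-s_j\delta_i^k\big),\qquad 1\le i,j,k\le n-1.$$
   Context: Fix $n\ge3$, $R>0$, $a\in\mathbb R$, $m>0$ and a symmetric positive definite $n\times n$ matrix $\mathbb J$ (mass tensor). Let $E_1,\dots,E_n$ be the standard basis of $\mathbb R^n$ and, for $u,v\in\mathbb R^n$, $u\wedge v=uv^T-vu^T\in\mathfrak{so}(n)$. The configuration space is $Q=\mathbb R^{n-1}\times SO(n)$ with points $((X_1,\dots,X_{n-1}),g)$; set $X=(X_1,\dots,X_{n-1},R+a)^T\in\mathbb R^n$ (so $\dot X_n=0$) and $\Omega=g^{-1}\dot g\in\mathfrak{so}(n)$. The Lagrangian is $L=\frac12(\mathbb I\Omega,\Omega)_\kappa+\frac m2\|\dot X+\Omega X\|^2$, where $\mathbb I(\Omega)=\mathbb J\Omega+\Omega\mathbb J$, $(\xi,\eta)_\kappa=-\frac12\mathrm{tr}(\xi\eta)$ and $\|\cdot\|$ is the Euclidean norm; this defines the kinetic energy metric $\langle\cdot,\cdot\rangle$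 on $Q$ (no potential). The constraints are the rolling constraint $\dot X=-R\,\Omega E_n$ and the no-spin constraint $\Omega_{\mu\nu}=0$ for $1\le\mu,\nu\le n-1$; together they are equivalent to $\Omega=-\frac1R\dot X\wedge E_n$ with $\dot X\in\mathbb R^{n-1}\times\{0\}$, and define the distribution $\mathcal D\subset TQ$. $SO(n)$ acts on $Q$ by $h\cdot(X,g)=(X,hg)$, making this an $SO(n)$-Chaplygin system (free proper isometric action, $\mathcal D$ invariant, $T_qQ=\mathcal D_q\oplus\mathfrak{so}(n)\cdot q$) with shape space $S=\mathbb R^{n-1}$ and global coordinates $s_i=X_i$, $i=1,\dots,n-1$. The horizontal lift $\mathrm{hor}_q(\partial_{s_i})$ is the vector in $\mathcal D_q$ projecting to $\partial_{s_i}$; with $K_{kl}=\langle\mathrm{hor}_q\partial_{s_k},\mathrm{hor}_q\partial_{s_l}\rangle$ and inverse $K^{kl}$, the gyroscopic coefficients are $C_{ij}^k=\sum_lK^{kl}\langle[\mathrm{hor}_q\partial_{s_i},\mathrm{hor}_q\partial_{s_j}],\mathrm{hor}_q\partial_{s_l}\rangle_q$ (Lie bracket of vector fields on $Q$). *)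

theory Defs
  imports "HOL-Analysis.Analysis"
begin

definition lastI :: "'n::{finite,linorder}" where
  "lastI = Max UNIV"

definition shapeI :: "'n::{finite,linorder} set" where
  "shapeI = UNIV - {lastI}"

definition skew :: "real^'n^'n \<Rightarrow> bool" where
  "skew A \<longleftrightarrow> transpose A = - A"

definition wedge :: "real^'n \<Rightarrow> real^'n \<Rightarrow> real^'n^'n" where
  "wedge u v = (\<chi> i j. u$i * v$j - v$i * u$j)"

definition pos_def_sym :: "real^'n^'n \<Rightarrow> bool" where
  "pos_def_sym J \<longleftrightarrow> transpose J = J \<and> (\<forall>v. v \<noteq> 0 \<longrightarrow> v \<bullet> (J *v v) > 0)"

definition inertia :: "real^'n^'n \<Rightarrow> real^'n^'n \<Rightarrow> real^'n^'n" where
  "inertia J \<Omega> = J ** \<Omega> + \<Omega> ** J"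

definition kappa :: "real^'n^'n \<Rightarrow> real^'n^'n \<Rightarrow> real" where
  "kappa \<xi> \<eta> = - (1/2) * trace (\<xi> ** \<eta>)"

text \<open>Ambient space of Q: pairs (x, g) with x \<in> R^n (last coordinate 0 on Q
  encoding (X_1..X_{n-1})) and g an n\<times>n matrix. Q itself:\<close>

definition Qspace :: "(((real,'n::{finite,linorder}) vec) \<times> ((real,'n) vec,'n) vec) set" where
  "Qspace = {(x, g). x $ lastI = 0 \<and> rotation_matrix g}"

definition posX :: "real \<Rightarrow> real \<Rightarrow> (real,'n::{finite,linorder}) vec \<Rightarrow> (real,'n) vec" where
  "posX R a x = (\<chi> i. if i = lastI then R + a else x $ i)"

definition bodyOmega :: "real^'n^'n \<Rightarrow> real^'n^'n \<Rightarrow> real^'n^'n" where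
  "bodyOmega g gd = matrix_inv g ** gd"

definition lagr :: "real \<Rightarrow> real \<Rightarrow> real \<Rightarrow> ((real,'n::{finite,linorder}) vec,'n) vec
      \<Rightarrow> ((real,'n) vec \<times> ((real,'n) vec,'n) vec) \<Rightarrow> ((real,'n) vec \<times> ((real,'n) vec,'n) vec) \<Rightarrow> real" where
  "lagr R a m J q v =
     (let \<Omega> = bodyOmega (snd q) (snd v)
      in (1/2) * kappa (inertia J \<Omega>) \<Omega>
         + (m/2) * (norm (fst v + \<Omega> *v posX R a (fst q)))\<^sup>2)"

text \<open>Kinetic energy metric: the symmetric bilinear form with L(v) = 1/2 <v,v>.\<close>
definition kmetric :: "real \<Rightarrow> real \<Rightarrow> real \<Rightarrow> ((real,'n::{finite,linorder}) vec,'n) vec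
      \<Rightarrow> ((real,'n) vec \<times> ((real,'n) vec,'n) vec) \<Rightarrow> ((real,'n) vec \<times> ((real,'n) vec,'n) vec)
      \<Rightarrow> ((real,'n) vec \<times> ((real,'n) vec,'n) vec) \<Rightarrow> real" where
  "kmetric R a m J q v w = lagr R a m J q (v + w) - lagr R a m J q v - lagr R a m J q w"

text \<open>Constraint distribution: rolling (Xdot = -R \<Omega> E_n) and no-spin
  (\<Omega>_{\<mu>\<nu>} = 0 for \<mu>,\<nu> < n), with \<Omega> = g^{-1} gdot in so(n) and Xdot_n = 0.\<close>
definition distD :: "real \<Rightarrow> ((real,'n::{finite,linorder}) vec \<times> ((real,'n) vec,'n) vec)
      \<Rightarrow> ((real,'n) vec \<times> ((real,'n) vec,'n) vec) set" where
  "distD R q = {(xd, gd). xd $ lastI = 0 \<and>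
      skew (bodyOmega (snd q) gd) \<and>
      xd = - R *s (bodyOmega (snd q) gd *v axis lastI 1) \<and>
      (\<forall>\<mu> \<nu>. \<mu> \<noteq> lastI \<longrightarrow> \<nu> \<noteq> lastI \<longrightarrow> bodyOmega (snd q) gd $ \<mu> $ \<nu> = 0)}"

text \<open>Horizontal lift of \<partial>_{s_i}: the vector in D_q projecting to \<partial>_{s_i}
  (the projection Q \<rightarrow> S is (x,g) \<mapsto> x).\<close>
definition horL :: "real \<Rightarrow> 'n::{finite,linorder}
      \<Rightarrow> ((real,'n) vec \<times> ((real,'n) vec,'n) vec) \<Rightarrow> ((real,'n) vec \<times> ((real,'n) vec,'n) vec)" where
  "horL R i q = (THE v. v \<in> distD R q \<and> fst v = axis i 1)"

text \<open>Lie bracket of vector fields, computed in the ambient (open) vector space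
  containing Q: [V,W](p) = DW(p)(V p) - DV(p)(W p).\<close>
definition lie_bracket :: "('a::real_normed_vector \<Rightarrow> 'a) \<Rightarrow> ('a \<Rightarrow> 'a) \<Rightarrow> 'a \<Rightarrow> 'a" where
  "lie_bracket V W p = frechet_derivative W (at p) (V p) - frechet_derivative V (at p) (W p)"

definition Kmat :: "real \<Rightarrow> real \<Rightarrow> real \<Rightarrow> ((real,'n::{finite,linorder}) vec,'n) vec
      \<Rightarrow> ((real,'n) vec \<times> ((real,'n) vec,'n) vec) \<Rightarrow> 'n \<Rightarrow> 'n \<Rightarrow> real" where
  "Kmat R a m J q k l = kmetric R a m J q (horL R k q) (horL R l q)"

definition Kinv :: "real \<Rightarrow> real \<Rightarrow> real \<Rightarrow> ((real,'n::{finite,linorder}) vec,'n) vec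
      \<Rightarrow> ((real,'n) vec \<times> ((real,'n) vec,'n) vec) \<Rightarrow> 'n \<Rightarrow> 'n \<Rightarrow> real" where
  "Kinv R a m J q = (THE M. (\<forall>k l. (k \<notin> shapeI \<or> l \<notin> shapeI) \<longrightarrow> M k l = 0) \<and>
      (\<forall>k\<in>shapeI. \<forall>j\<in>shapeI.
         (\<Sum>l\<in>shapeI. M k l * Kmat R a m J q l j) = (if k = j then 1 else 0)))"

definition gyro :: "real \<Rightarrow> real \<Rightarrow> real \<Rightarrow> ((real,'n::{finite,linorder}) vec,'n) vec
      \<Rightarrow> ((real,'n) vec \<times> ((real,'n) vec,'n) vec) \<Rightarrow> 'n \<Rightarrow> 'n \<Rightarrow> 'n \<Rightarrow> real" where
  "gyro R a m J q i j k =
     (\<Sum>l\<in>shapeI. Kinv R a m J q k l *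
        kmetric R a m J q (lie_bracket (horL R i) (horL R j) q) (horL R l q))"

end

theory Submission
  imports Defs
begin



lemma mat_add_rdistrib: "((A::real^'n::finite^'m) + B) ** C = A ** C + B ** C"
  by (simp add: vec_eq_iff matrix_matrix_mult_def sum.distrib distrib_right)

lemma mat_diff_ldistrib: "(A::real^'n::finite^'m) ** (B - C) = A ** B - A ** C"
  by (simp add: vec_eq_iff matrix_matrix_mult_def sum_subtractf right_diff_distrib)

lemma kappa_sym: "kappa (inertia J A) B = kappa (inertia J B) (A::real^'n^'n)"
proof -
  have "trace ((J ** A + A ** J) ** B) = trace (J ** A ** B) + trace (A ** J ** B)"
    by (simp add: mat_add_rdistrib trace_add)
  moreover have "trace ((J ** B + B ** J) ** A) = trace (J ** B ** A) + trace (B ** J ** A)"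
    by (simp add: mat_add_rdistrib trace_add)
  moreover have "trace (J ** B ** A) = trace (A ** J ** B)"
    by (metis matrix_mul_assoc trace_mul_sym)
  moreover have "trace (B ** J ** A) = trace (J ** A ** B)"
    by (metis matrix_mul_assoc trace_mul_sym)
  ultimately show ?thesis by (simp add: kappa_def inertia_def)
qed

lemma kappa_add1: "kappa (inertia J (A + B)) C = kappa (inertia J A) C + kappa (inertia J B) (C::real^'n^'n)"
  by (simp add: kappa_def inertia_def matrix_add_ldistrib mat_add_rdistrib trace_add algebra_simps)

lemma kappa_add2: "kappa (inertia J C) (A + B) = kappa (inertia J C) A + kappa (inertia J C) (B::real^'n^'n)"
  by (simp add: kappa_def inertia_def matrix_add_ldistrib mat_add_rdistrib trace_add algebra_simps)

lemma kmetric_eq: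
  "kmetric R a m J q v w =
     kappa (inertia J (bodyOmega (snd q) (snd v))) (bodyOmega (snd q) (snd w))
     + m * ((fst v + bodyOmega (snd q) (snd v) *v posX R a (fst q)) \<bullet>
            (fst w + bodyOmega (snd q) (snd w) *v posX R a (fst q)))"
proof -
  define Ov where "Ov = bodyOmega (snd q) (snd v)"
  define Ow where "Ow = bodyOmega (snd q) (snd w)"
  define X where "X = posX R a (fst q)"
  have O: "bodyOmega (snd q) (snd (v + w)) = Ov + Ow"
    by (simp add: Ov_def Ow_def bodyOmega_def matrix_add_ldistrib)
  have N: "(norm (fst (v + w) + (Ov + Ow) *v X))\<^sup>2 = (norm (fst v + Ov *v X))\<^sup>2 + (norm (fst w + Ow *v X))\<^sup>2
        + 2 * ((fst v + Ov *v X) \<bullet> (fst w + Ow *v X))"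
  proof -
    have "fst (v + w) + (Ov + Ow) *v X = (fst v + Ov *v X) + (fst w + Ow *v X)"
      by (simp add: matrix_vector_mult_add_rdistrib algebra_simps)
    then show ?thesis by (simp add: power2_norm_eq_inner inner_add algebra_simps inner_commute)
  qed
  have K: "kappa (inertia J (Ov + Ow)) (Ov + Ow) = kappa (inertia J Ov) Ov + kappa (inertia J Ow) Ow + 2 * kappa (inertia J Ov) Ow"
    using kappa_sym[of J Ow Ov] by (simp add: kappa_add1 kappa_add2)
  show ?thesis
    unfolding kmetric_def lagr_def Let_def O Ov_def[symmetric] Ow_def[symmetric] X_def[symmetric] N K
    by (simp add: algebra_simps)
qed

lemma diag_mult_l: "(\<chi> i j. if i = j then Jd i else 0) ** (A::real^'n::finite^'n) = (\<chi> r c. Jd r * A $ r $ c)"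
proof -
  have "(\<Sum>k\<in>UNIV. (if r = k then Jd r else 0) * A $ k $ c) = Jd r * A $ r $ c" for r c
  proof -
    have "(\<Sum>k\<in>UNIV. (if r = k then Jd r else 0) * A $ k $ c) = (\<Sum>k\<in>UNIV. if k = r then Jd r * A $ k $ c else 0)"
      by (rule sum.cong) auto
    then show ?thesis by simp
  qed
  then show ?thesis by (simp add: matrix_matrix_mult_def)
qed

lemma diag_mult_r: "(A::real^'n::finite^'n) ** (\<chi> i j. if i = j then Jd i else 0) = (\<chi> r c. A $ r $ c * Jd c)"
proof -
  have "(\<Sum>k\<in>UNIV. A $ r $ k * (if k = c then Jd k else 0)) = A $ r $ c * Jd c" for r c
  proof -
    have "(\<Sum>k\<in>UNIV. A $ r $ k * (if k = c then Jd k else 0)) = (\<Sum>k\<in>UNIV. if k = c then A $ r $ k * Jd k else 0)"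
      by (rule sum.cong) auto
    then show ?thesis by simp
  qed
  then show ?thesis by (simp add: matrix_matrix_mult_def)
qed

lemma kappa_diag:
  "kappa (inertia (\<chi> i j. if i = j then Jd i else 0) A) (B::real^'n::finite^'n)
     = -(1/2) * (\<Sum>r\<in>UNIV. \<Sum>c\<in>UNIV. B $ c $ r * ((Jd r + Jd c) * A $ r $ c))"
  unfolding kappa_def inertia_def diag_mult_l diag_mult_r
  by (simp add: trace_def matrix_matrix_mult_def algebra_simps sum.distrib sum_distrib_left)


definition Om :: "real \<Rightarrow> 'n::{finite,linorder} \<Rightarrow> ((real,'n) vec,'n) vec" where
 "Om R i = (\<chi> r c. (if r = i \<and> c = lastI then -1/R else 0) + (if r = lastI \<and> c = i then 1/R else 0))"

lemma Om_nth: "Om R i $ r $ c = (if r = i \<and> c = lastI then -1/R else 0) + (if r = lastI \<and> c = i then 1/R else 0)"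
  by (simp add: Om_def)

lemma sum_Om_left:
  fixes i :: "'n::{finite,linorder}"
  shows "(\<Sum>k\<in>UNIV. Om R i $ r $ k * f k) = (if r = i then -(1/R) * f lastI else 0) + (if r = lastI then f i / R else 0)"
proof -
  have "(\<Sum>k\<in>UNIV. Om R i $ r $ k * f k) = (\<Sum>k\<in>UNIV. (if k = lastI then (if r = i then -(1/R) * f k else 0) else 0) + (if k = i then (if r = lastI then f k / R else 0) else 0))"
    by (rule sum.cong) (auto simp: Om_nth)
  also have "\<dots> = (if r = i then -(1/R) * f lastI else 0) + (if r = lastI then f i / R else 0)"
    by (simp add: sum.distrib)
  finally show ?thesis .
qed

lemma OmOm:
  fixes i j :: "'n::{finite,linorder}"
  assumes "i \<noteq> lastI" "j \<noteq> lastI"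
  shows "(Om R i ** Om R j) $ r $ c = (if r = i \<and> c = j then -1/R^2 else 0) + (if r = lastI \<and> c = lastI \<and> i = j then -1/R^2 else 0)"
  using assms by (simp add: matrix_matrix_mult_def sum_Om_left) (auto simp: Om_nth power2_eq_square)

lemma sum_Om_col:
  fixes l :: "'n::{finite,linorder}"
  shows "(\<Sum>c\<in>UNIV. Om R l $ c $ r * g c) = (if r = lastI then -(1/R) * g l else 0) + (if r = l then g lastI / R else 0)"
proof -
  have "(\<Sum>c\<in>UNIV. Om R l $ c $ r * g c) = (\<Sum>c\<in>UNIV. (if c = l then (if r = lastI then -(1/R) * g c else 0) else 0) + (if c = lastI then (if r = l then g c / R else 0) else 0))"
    by (rule sum.cong) (auto simp: Om_nth)
  also have "\<dots> = (if r = lastI then -(1/R) * g l else 0) + (if r = l then g lastI / R else 0)"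
    by (simp add: sum.distrib)
  finally show ?thesis .
qed

lemma sum_ifs:
  fixes p1 :: "'n::finite"
  shows "(\<Sum>r\<in>UNIV. ((if r = p1 then a1 else 0) + (if r = p2 then a2 else 0)) * ((if r = p3 then b3 else 0) + (if r = p4 then b4 else (0::real))))
   = (if p1 = p3 then a1 * b3 else 0) + (if p1 = p4 then a1 * b4 else 0) + (if p2 = p3 then a2 * b3 else 0) + (if p2 = p4 then a2 * b4 else 0)"
proof -
  have "(\<Sum>r\<in>UNIV. ((if r = p1 then a1 else 0) + (if r = p2 then a2 else 0)) * ((if r = p3 then b3 else 0) + (if r = p4 then b4 else (0::real))))
    = (\<Sum>r\<in>UNIV. (if r = p1 then (if p1 = p3 then a1 * b3 else 0) + (if p1 = p4 then a1 * b4 else 0) else 0)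
        + (if r = p2 then (if p2 = p3 then a2 * b3 else 0) + (if p2 = p4 then a2 * b4 else 0) else 0))"
    by (rule sum.cong) (auto simp: algebra_simps)
  then show ?thesis by (simp add: sum.distrib)
qed

lemma kappa_OmOm:
  fixes k l :: "'n::{finite,linorder}"
  assumes "k \<noteq> lastI" "l \<noteq> lastI" "R \<noteq> 0"
  shows "kappa (inertia (\<chi> i j. if i = j then Jd i else 0) (Om R k)) (Om R l) = (if k = l then (Jd k + Jd lastI) / R^2 else 0)"
  using assms
  by (simp add: kappa_diag sum_Om_col sum.distrib) (auto simp: Om_nth power2_eq_square field_simps)

definition Bm :: "real \<Rightarrow> 'n::{finite,linorder} \<Rightarrow> 'n \<Rightarrow> ((real,'n) vec,'n) vec" where
  "Bm R i j = Om R i ** Om R j - Om R j ** Om R i"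

lemma Bm_nth:
  fixes i j :: "'n::{finite,linorder}"
  assumes "i \<noteq> lastI" "j \<noteq> lastI"
  shows "Bm R i j $ r $ c = (if r = i \<and> c = j then -1/R^2 else 0) - (if r = j \<and> c = i then -1/R^2 else 0)"
  using assms by (auto simp: Bm_def OmOm)

lemma kappa_Bm:
  fixes i j l :: "'n::{finite,linorder}"
  assumes "i \<noteq> lastI" "j \<noteq> lastI" "l \<noteq> lastI"
  shows "kappa (inertia (\<chi> i j. if i = j then Jd i else 0) (Bm R i j)) (Om R l) = 0"
  using assms
  by (simp add: kappa_diag sum_Om_col sum.distrib) (auto simp: Bm_nth)

lemma hv:
  fixes k :: "'n::{finite,linorder}"
  assumes "k \<noteq> lastI" "R \<noteq> 0"
  shows "(axis k 1 + Om R k *v posX R a x) $ r = (if r = k then -a/R else 0) + (if r = lastI then x$k/R else 0)"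
  using assms
  by (simp add: matrix_vector_mult_def sum_Om_left) (auto simp: axis_def posX_def field_simps)

lemma bv:
  fixes i j :: "'n::{finite,linorder}"
  assumes "i \<noteq> lastI" "j \<noteq> lastI"
  shows "(Bm R i j *v posX R a x) $ r = (if r = i then - x$j/R^2 else 0) + (if r = j then x$i/R^2 else 0)"
proof -
  have "(Bm R i j *v posX R a x) $ r = (\<Sum>c\<in>UNIV. (if c = j then (if r = i then - x$j/R^2 else 0) else 0) + (if c = i then (if r = j then x$i/R^2 else 0) else 0))"
    unfolding matrix_vector_mult_def vec_lambda_beta using assms
    by (intro sum.cong refl) (auto simp: Bm_nth posX_def)
  also have "\<dots> = (if r = i then - x$j/R^2 else 0) + (if r = j then x$i/R^2 else 0)"
    by (simp add: sum.distrib)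
  finally show ?thesis .
qed
lemma minv: assumes "invertible (g::real^'n::finite^'n)"
  shows "matrix_inv g ** g = mat 1" "g ** matrix_inv g = mat 1"
proof -
  have "\<exists>A'. g ** A' = mat 1 \<and> A' ** g = mat 1" using assms by (simp add: invertible_def)
  from someI_ex[OF this] show "matrix_inv g ** g = mat 1" "g ** matrix_inv g = mat 1"
    by (simp_all add: matrix_inv_def)
qed

lemma bodyOmega_g: "invertible g \<Longrightarrow> bodyOmega g (g ** M) = M"
  by (simp add: bodyOmega_def matrix_mul_assoc minv)

lemma horL_eq:
  fixes i :: "'n::{finite,linorder}"
  assumes g: "invertible g" and i: "i \<noteq> lastI" and R: "R \<noteq> 0"
  shows "horL R i (x,g) = (axis i 1, g ** Om R i)"
  unfolding horL_def
proof (rule the_equality)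
  show "(axis i 1, g ** Om R i) \<in> distD R (x, g) \<and> fst (axis i 1, g ** Om R i) = axis i 1"
    using i R by (auto simp: distD_def bodyOmega_g[OF g] skew_def Om_def vec_eq_iff transpose_def
        matrix_vector_mult_def axis_def if_distrib cong: if_cong)
next
  fix v assume v: "v \<in> distD R (x, g) \<and> fst v = axis i 1"
  obtain xd gd where vv: "v = (xd, gd)" by (cases v)
  define W where "W = bodyOmega g gd"
  have xd: "xd = axis i 1" using v vv by simp
  have sk: "transpose W = - W" using v vv by (simp add: distD_def W_def skew_def)
  have xe: "xd = - R *s (W *v axis lastI 1)" using v vv by (simp add: distD_def W_def)
  have ns: "\<And>\<mu> \<nu>. \<mu> \<noteq> lastI \<Longrightarrow> \<nu> \<noteq> lastI \<Longrightarrow> W $ \<mu> $ \<nu> = 0" using v vv by (simp add: distD_def W_def)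
  have col: "W $ r $ lastI = - (if r = i then 1 else 0) / R" for r
  proof -
    have "xd $ r = - R * W $ r $ lastI"
      using xe by (simp add: matrix_vector_mult_def axis_def if_distrib cong: if_cong)
    then show ?thesis using R xd by (simp add: axis_def field_simps)
  qed
  have "W = Om R i"
  proof (subst vec_eq_iff, intro allI, subst vec_eq_iff, intro allI)
    fix r c
    show "W $ r $ c = Om R i $ r $ c"
    proof (cases "c = lastI")
      case True then show ?thesis using col[of r] i by (auto simp: Om_def)
    next
      case False
      show ?thesis
      proof (cases "r = lastI")
        case True
        have "W $ r $ c = - (transpose W $ r $ c)" using sk by simp
        also have "\<dots> = - W $ c $ r" by (simp add: transpose_def)
        finally show ?thesis using col[of c] True False i by (auto simp: Om_def)
      next
        case f2: False then show ?thesis using ns False by (simp add: Om_def)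
      qed
    qed
  qed
  then have "gd = g ** Om R i"
    by (metis W_def bodyOmega_def g matrix_mul_assoc matrix_mul_lid minv(2))
  then show "v = (axis i 1, g ** Om R i)" using vv xd by simp
qed

lemma cdet: "continuous_on UNIV (\<lambda>A::real^'n^'n. det A)"
  unfolding det_def by (intro continuous_intros)

lemma open_inv: "open {p::('a::topological_space \<times> ((real,'n::finite) vec,'n) vec). invertible (snd p)}"
proof -
  have "{p::('a \<times> ((real,'n) vec,'n) vec). invertible (snd p)} = {p. det (snd p) \<noteq> 0}"
    by (simp add: invertible_det_nz)
  moreover have "open {p::('a \<times> ((real,'n) vec,'n) vec). det (snd p) \<noteq> 0}"
    by (intro open_Collect_neq continuous_intros continuous_on_compose2[OF cdet]) auto
  ultimately show ?thesis by simp
qed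

lemma rot_inv: "rotation_matrix (g::real^'n::finite^'n) \<Longrightarrow> invertible g"
  unfolding rotation_matrix_def orthogonal_matrix_def invertible_def by blast

lemma mat_scale_l: "(c *\<^sub>R (A::real^'n::finite^'m)) ** B = c *\<^sub>R (A ** B)"
  by (simp add: vec_eq_iff matrix_matrix_mult_def scaleR_sum_right sum_distrib_left mult.assoc)

lemma lin_Om: "linear (\<lambda>v::((real,'n::finite) vec \<times> ((real,'n) vec,'n) vec). snd v ** M)"
  by (rule linearI) (simp_all add: mat_add_rdistrib mat_scale_l)

lemma horL_deriv:
  fixes j :: "'n::{finite,linorder}"
  assumes g: "invertible (snd p)" and j: "j \<noteq> lastI" and R: "R \<noteq> 0"
  shows "(horL R j has_derivative (\<lambda>v. (0, snd v ** Om R j))) (at p)"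
proof -
  have d1: "((\<lambda>v. (axis j 1, snd v ** Om R j)) has_derivative (\<lambda>v. (0, snd v ** Om R j))) (at p)"
    by (intro has_derivative_Pair has_derivative_const linear_imp_has_derivative lin_Om)
  show ?thesis
  proof (rule has_derivative_transform_within_open[OF d1 open_inv])
    show "p \<in> {p. invertible (snd p)}" using g by simp
    fix y :: "(real,'n) vec \<times> ((real,'n) vec,'n) vec" assume "y \<in> {p. invertible (snd p)}"
    then show "(axis j 1, snd y ** Om R j) = horL R j y"
      using horL_eq[of "snd y" j R "fst y"] j R by simp
  qed
qed

lemma lie_eq:
  fixes i j :: "'n::{finite,linorder}"
  assumes g: "invertible g" and i: "i \<noteq> lastI" and j: "j \<noteq> lastI" and R: "R \<noteq> 0"
  shows "lie_bracket (horL R i) (horL R j) (x,g) = (0, g ** Bm R i j)"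
proof -
  have di: "frechet_derivative (horL R i) (at (x,g)) = (\<lambda>v. (0, snd v ** Om R i))"
    using frechet_derivative_at[OF horL_deriv[of "(x,g)" i R]] g i R by simp
  have dj: "frechet_derivative (horL R j) (at (x,g)) = (\<lambda>v. (0, snd v ** Om R j))"
    using frechet_derivative_at[OF horL_deriv[of "(x,g)" j R]] g j R by simp
  show ?thesis
    unfolding lie_bracket_def di dj horL_eq[OF g i R] horL_eq[OF g j R]
    by (simp add: Bm_def mat_diff_ldistrib matrix_mul_assoc)
qed

lemma hinner:
  fixes k l :: "'n::{finite,linorder}"
  assumes k: "k \<noteq> lastI" and l: "l \<noteq> lastI" and R: "R \<noteq> 0"
  shows "(axis k 1 + Om R k *v posX R a x) \<bullet> (axis l 1 + Om R l *v posX R a x)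
    = (if k = l then a^2/R^2 else 0) + x$k * x$l / R^2"
  unfolding inner_vec_def hv[OF k R] hv[OF l R] inner_real_def sum_ifs
  using k l by (simp add: power2_eq_square)

lemma binner:
  fixes i j l :: "'n::{finite,linorder}"
  assumes i: "i \<noteq> lastI" and j: "j \<noteq> lastI" and l: "l \<noteq> lastI" and R: "R \<noteq> 0"
  shows "(Bm R i j *v posX R a x) \<bullet> (axis l 1 + Om R l *v posX R a x)
    = (if l = i then a * x$j / R^3 else 0) - (if l = j then a * x$i / R^3 else 0)"
  unfolding inner_vec_def hv[OF l R] bv[OF i j] inner_real_def sum_ifs
  using i j l R by (auto simp: power2_eq_square power3_eq_cube)

lemma Kmat_eq:
  fixes k l :: "'n::{finite,linorder}"
  assumes g: "invertible g" and k: "k \<noteq> lastI" and l: "l \<noteq> lastI" and R: "R \<noteq> 0"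
  shows "Kmat R a m (\<chi> i j. if i = j then Jd i else 0) (x,g) k l
     = (if k = l then (Jd k + Jd lastI)/R^2 + m*a^2/R^2 else 0) + m * x$k * x$l / R^2"
  unfolding Kmat_def horL_eq[OF g k R] horL_eq[OF g l R] kmetric_eq
  using k l R
  by (simp only: bodyOmega_g[OF g] fst_conv snd_conv hinner[OF k l R] kappa_OmOm[OF k l R])
     (simp add: algebra_simps add_divide_distrib)

lemma pair_eq:
  fixes i j l :: "'n::{finite,linorder}"
  assumes g: "invertible g" and i: "i \<noteq> lastI" and j: "j \<noteq> lastI" and l: "l \<noteq> lastI" and R: "R \<noteq> 0"
  shows "kmetric R a m (\<chi> i j. if i = j then Jd i else 0) (x,g) (lie_bracket (horL R i) (horL R j) (x,g)) (horL R l (x,g))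
     = m * ((if l = i then a * x$j / R^3 else 0) - (if l = j then a * x$i / R^3 else 0))"
  unfolding lie_eq[OF g i j R] horL_eq[OF g l R] kmetric_eq
  using i j l R
  by (simp add: bodyOmega_g[OF g] kappa_Bm binner)

lemma the_inv_unique:
  fixes S :: "'n set" and K M0 :: "'n \<Rightarrow> 'n \<Rightarrow> real"
  assumes fin: "finite S"
    and z: "\<forall>k l. (k \<notin> S \<or> l \<notin> S) \<longrightarrow> M0 k l = 0"
    and left: "\<forall>k\<in>S. \<forall>j\<in>S. (\<Sum>l\<in>S. M0 k l * K l j) = (if k = j then 1 else 0)"
    and right: "\<forall>l\<in>S. \<forall>j\<in>S. (\<Sum>p\<in>S. K l p * M0 p j) = (if l = j then 1 else 0)"
  shows "(THE M. (\<forall>k l. (k \<notin> S \<or> l \<notin> S) \<longrightarrow> M k l = 0) \<and>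
      (\<forall>k\<in>S. \<forall>j\<in>S. (\<Sum>l\<in>S. M k l * K l j) = (if k = j then 1 else 0))) = M0"
proof (rule the_equality)
  show "(\<forall>k l. (k \<notin> S \<or> l \<notin> S) \<longrightarrow> M0 k l = 0) \<and>
      (\<forall>k\<in>S. \<forall>j\<in>S. (\<Sum>l\<in>S. M0 k l * K l j) = (if k = j then 1 else 0))" using z left by blast
next
  fix M assume M: "(\<forall>k l. (k \<notin> S \<or> l \<notin> S) \<longrightarrow> M k l = 0) \<and>
      (\<forall>k\<in>S. \<forall>j\<in>S. (\<Sum>l\<in>S. M k l * K l j) = (if k = j then 1 else 0))"
  show "M = M0"
  proof (intro ext)
    fix k j
    show "M k j = M0 k j"
    proof (cases "k \<in> S \<and> j \<in> S")
      case False then show ?thesis using M z by auto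
    next
      case True
      have "M k j = (\<Sum>l\<in>S. M k l * (if l = j then 1 else 0))"
        using True fin by (simp add: if_distrib cong: if_cong)
      also have "\<dots> = (\<Sum>l\<in>S. M k l * (\<Sum>p\<in>S. K l p * M0 p j))"
        using right True by (intro sum.cong) auto
      also have "\<dots> = (\<Sum>p\<in>S. (\<Sum>l\<in>S. M k l * K l p) * M0 p j)"
      proof -
        have "(\<Sum>l\<in>S. M k l * (\<Sum>p\<in>S. K l p * M0 p j)) = (\<Sum>l\<in>S. \<Sum>p\<in>S. M k l * K l p * M0 p j)"
          by (simp add: sum_distrib_left mult.assoc)
        also have "\<dots> = (\<Sum>p\<in>S. \<Sum>l\<in>S. M k l * K l p * M0 p j)"
          by (rule sum.swap)
        also have "\<dots> = (\<Sum>p\<in>S. (\<Sum>l\<in>S. M k l * K l p) * M0 p j)"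
          by (simp add: sum_distrib_right)
        finally show ?thesis .
      qed
      also have "\<dots> = (\<Sum>p\<in>S. (if k = p then 1 else 0) * M0 p j)"
        using M True by (intro sum.cong) auto
      also have "\<dots> = (\<Sum>p\<in>S. if p = k then M0 p j else 0)" by (rule sum.cong) auto
      also have "\<dots> = M0 k j" using True fin by simp
      finally show ?thesis .
    qed
  qed
qed

lemma inv_calc:
  fixes S :: "'n set" and x :: "'n \<Rightarrow> real"
  assumes fin: "finite S" and k: "k \<in> S" and j: "j \<in> S" and al: "\<alpha> > 0" and D: "\<alpha> + \<beta> * (\<Sum>l\<in>S. x l * x l) \<noteq> 0"
  shows "(\<Sum>l\<in>S. ((if k = l then 1/\<alpha> else 0) - \<beta> * x k * x l / (\<alpha> * (\<alpha> + \<beta> * (\<Sum>l\<in>S. x l * x l))))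
            * ((if l = j then \<alpha> else 0) + \<beta> * x l * x j)) = (if k = j then 1 else 0)"
proof -
  define s where "s = (\<Sum>l\<in>S. x l * x l)"
  define D' where "D' = \<alpha> + \<beta> * s"
  have D': "D' \<noteq> 0" using D by (simp add: D'_def s_def)
  define C where "C = \<beta> * \<beta> * x k * x j / (\<alpha> * D')"
  have "(\<Sum>l\<in>S. ((if k = l then 1/\<alpha> else 0) - \<beta> * x k * x l / (\<alpha> * D')) * ((if l = j then \<alpha> else 0) + \<beta> * x l * x j))
     = (\<Sum>l\<in>S. (if l = k then (1/\<alpha>) * ((if k = j then \<alpha> else 0) + \<beta> * x k * x j) else 0)
          - (if l = j then \<beta> * x k * x j / D' else 0) - C * (x l * x l))"
    using al D' unfolding C_def by (intro sum.cong) (auto simp: field_simps)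
  also have "\<dots> = (1/\<alpha>) * ((if k = j then \<alpha> else 0) + \<beta> * x k * x j) - \<beta> * x k * x j / D'
        - C * s"
    using fin k j by (simp add: sum_subtractf sum_distrib_left[symmetric] s_def)
  also have "\<dots> = (if k = j then 1 else 0)"
  proof -
    have e: "1/\<alpha> - 1/D' = \<beta> * s/(\<alpha>*D')" using al D' by (simp add: D'_def field_simps)
    have "\<beta>*x k*x j*(1/\<alpha>) - \<beta>*x k*x j/D' = \<beta>*x k*x j*(1/\<alpha> - 1/D')" by (simp add: algebra_simps)
    also have "\<dots> = \<beta>*x k*x j*(\<beta> * s/(\<alpha>*D'))" by (simp add: e)
    also have "\<dots> = C * s" by (simp add: C_def)
    finally have key: "\<beta>*x k*x j*(1/\<alpha>) - \<beta>*x k*x j/D' - C * s = 0" by simp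
    show ?thesis using al key by (auto simp: algebra_simps)
  qed
  finally show ?thesis by (simp add: s_def D'_def)
qed


lemma diag_axis:
  "(axis i 1) \<bullet> ((\<chi> r c. if r = c then Jd r else 0) *v axis i 1) = (Jd i :: real)"
proof -
  have "((\<chi> r c. if r = c then Jd r else 0) *v axis i 1) $ i = Jd i"
    unfolding matrix_vector_mult_def vec_lambda_beta
    by (subst sum.cong[OF refl, of _ _ "\<lambda>c. if c = i then Jd i else 0"]) (auto simp: axis_def)
  then show ?thesis by (simp add: inner_axis' )
qed

theorem mainTheorem5:
  fixes R m :: real
  assumes n3: "CARD('n::{finite,linorder}) \<ge> 3"
    and R: "R > 0" and m: "m > 0"
  shows
    "(\<forall>(J::((real,'n) vec,'n) vec) (a::real) (Jd::'n \<Rightarrow> real).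
        J = (\<chi> i j. if i = j then Jd i else 0) \<and> pos_def_sym J \<and> a = 0 \<longrightarrow>
        (\<forall>q\<in>Qspace. \<forall>i\<in>shapeI. \<forall>j\<in>shapeI. \<forall>k\<in>shapeI. gyro R a m J q i j k = 0))
   \<and> (\<forall>(J::((real,'n) vec,'n) vec) (a::real) (J1::real) (Jn::real).
        J = (\<chi> i j. if i = j then (if i = lastI then Jn else J1) else 0) \<and> pos_def_sym J \<longrightarrow>
        (\<forall>q\<in>Qspace. \<forall>i\<in>shapeI. \<forall>j\<in>shapeI. \<forall>k\<in>shapeI.
           gyro R a m J q i j k =
             (- m * a) / (R * (J1 + Jn + m * a\<^sup>2)) *
             (fst q $ i * (if j = k then 1 else 0) - fst q $ j * (if i = k then 1 else 0))))"
proof -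
  have R0: "R \<noteq> 0" using R by simp
  have S: "\<And>k. k \<in> shapeI \<longleftrightarrow> k \<noteq> lastI" by (simp add: shapeI_def)
  have finS: "finite (shapeI :: 'n set)" by simp
  have gyro_red: "gyro R a m J q i j k =
     (\<Sum>l\<in>shapeI. Kinv R a m J q k l *
        (m * ((if l = i then a * fst q $ j / R^3 else 0) - (if l = j then a * fst q $ i / R^3 else 0))))"
    if JJ: "J = (\<chi> i j. if i = j then Jd i else 0)" and q: "q \<in> Qspace" and i: "i \<in> shapeI" and j: "j \<in> shapeI"
    for J Jd a and q :: "(real,'n) vec \<times> ((real,'n) vec,'n) vec" and i j k :: 'n
  proof -
    obtain x g where qq: "q = (x, g)" by (cases q)
    have g: "invertible g" using q qq by (auto simp: Qspace_def rot_inv)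
    show ?thesis unfolding gyro_def qq JJ
      using i j by (intro sum.cong refl) (simp add: pair_eq[OF g _ _ _ R0] S)
  qed
  show ?thesis
  proof (intro conjI allI impI ballI)
    fix J :: "((real,'n) vec,'n) vec" and a :: real and Jd :: "'n \<Rightarrow> real" and q :: "(real,'n) vec \<times> ((real,'n) vec,'n) vec" and i j k :: 'n
    assume H: "J = (\<chi> i j. if i = j then Jd i else 0) \<and> pos_def_sym J \<and> a = 0"
      and q: "q \<in> Qspace" and i: "i \<in> shapeI" and j: "j \<in> shapeI" and k: "k \<in> shapeI"
    have JJ: "J = (\<chi> i j. if i = j then Jd i else 0)" using H by simp
    have "gyro R a m J q i j k = (\<Sum>l\<in>shapeI. Kinv R a m J q k l *
        (m * ((if l = i then a * fst q $ j / R^3 else 0) - (if l = j then a * fst q $ i / R^3 else 0))))"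
      by (rule gyro_red[OF JJ q i j])
    also have "\<dots> = 0" proof -
      have a0: "a = 0" using H by simp
      show ?thesis unfolding a0 by (rule sum.neutral) simp
    qed
    finally show "gyro R a m J q i j k = 0" .
  next
    fix J :: "((real,'n) vec,'n) vec" and a J1 Jn :: real and q :: "(real,'n) vec \<times> ((real,'n) vec,'n) vec" and i j k :: 'n
    assume H: "J = (\<chi> i j. if i = j then (if i = lastI then Jn else J1) else 0) \<and> pos_def_sym J"
      and q: "q \<in> Qspace" and i: "i \<in> shapeI" and j: "j \<in> shapeI" and k: "k \<in> shapeI"
    define Jd where "Jd = (\<lambda>i::'n. if i = lastI then Jn else J1)"
    have JJ: "J = (\<chi> i j. if i = j then Jd i else 0)" using H unfolding Jd_def by simp
    have pd: "\<And>v. v \<noteq> 0 \<Longrightarrow> v \<bullet> (J *v v) > 0" using H unfolding pos_def_sym_def by blast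
    have "Jd i > 0" using pd[of "axis i 1"] diag_axis[of i Jd] JJ by (simp add: axis_eq_0_iff)
    moreover have "i \<noteq> lastI" using i S by blast
    ultimately have J1: "J1 > 0" by (simp add: Jd_def)
    have "Jd lastI > 0" using pd[of "axis lastI 1"] diag_axis[of lastI Jd] JJ by (simp add: axis_eq_0_iff)
    then have Jn: "Jn > 0" by (simp add: Jd_def)
    obtain x g where qq: "q = (x, g)" by (cases q)
    have g: "invertible g" using q qq by (auto simp: Qspace_def rot_inv)
    define c where "c = J1 + Jn + m * a^2"
    have c: "c > 0" unfolding c_def using J1 Jn m by (simp add: add_pos_nonneg)
    define \<alpha> where "\<alpha> = c / R^2"
    define \<beta> where "\<beta> = m / R^2"
    have al: "\<alpha> > 0" using c R0 by (simp add: \<alpha>_def)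
    have be: "\<beta> \<ge> 0" using m by (simp add: \<beta>_def)
    define s where "s = (\<Sum>l\<in>shapeI. x $ l * x $ l)"
    have s: "s \<ge> 0" unfolding s_def by (intro sum_nonneg) simp
    define D where "D = \<alpha> + \<beta> * s"
    have D: "D > 0" using al be s by (simp add: D_def add_pos_nonneg)
    have Km: "Kmat R a m J q l p = (if l = p then \<alpha> else 0) + \<beta> * x $ l * x $ p"
      if "l \<in> shapeI" "p \<in> shapeI" for l p
      using that unfolding JJ qq
      by (simp add: Kmat_eq[OF g _ _ R0] S Jd_def \<alpha>_def \<beta>_def c_def add_divide_distrib)
    define M0 where "M0 = (\<lambda>k l. if k \<in> shapeI \<and> l \<in> shapeI then
        (if k = l then 1/\<alpha> else 0) - \<beta> * x $ k * x $ l / (\<alpha> * (\<alpha> + \<beta> * (\<Sum>l\<in>shapeI. x $ l * x $ l))) else 0)"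
    have left: "\<forall>k\<in>shapeI. \<forall>j\<in>shapeI. (\<Sum>l\<in>shapeI. M0 k l * Kmat R a m J q l j) = (if k = j then 1 else 0)"
    proof (intro ballI)
      fix k j :: 'n assume k: "k \<in> shapeI" and j: "j \<in> shapeI"
      have "(\<Sum>l\<in>shapeI. M0 k l * Kmat R a m J q l j) =
          (\<Sum>l\<in>shapeI. ((if k = l then 1/\<alpha> else 0) - \<beta> * x $ k * x $ l / (\<alpha> * (\<alpha> + \<beta> * (\<Sum>l\<in>shapeI. x $ l * x $ l))))
            * ((if l = j then \<alpha> else 0) + \<beta> * x $ l * x $ j))"
        using k j by (intro sum.cong refl) (simp add: M0_def Km)
      also have "\<dots> = (if k = j then 1 else 0)"
        by (rule inv_calc[OF finS k j al]) (use D in \<open>simp add: D_def s_def\<close>)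
      finally show "(\<Sum>l\<in>shapeI. M0 k l * Kmat R a m J q l j) = (if k = j then 1 else 0)" .
    qed
    have right: "\<forall>l\<in>shapeI. \<forall>j\<in>shapeI. (\<Sum>p\<in>shapeI. Kmat R a m J q l p * M0 p j) = (if l = j then 1 else 0)"
    proof (intro ballI)
      fix l j :: 'n assume l: "l \<in> shapeI" and j: "j \<in> shapeI"
      have "(\<Sum>p\<in>shapeI. Kmat R a m J q l p * M0 p j) = (\<Sum>p\<in>shapeI. M0 j p * Kmat R a m J q p l)"
        using l j by (intro sum.cong refl) (simp add: M0_def Km algebra_simps)
      also have "\<dots> = (if j = l then 1 else 0)" using left l j by blast
      finally show "(\<Sum>p\<in>shapeI. Kmat R a m J q l p * M0 p j) = (if l = j then 1 else 0)" by simp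
    qed
    have z: "\<forall>k l::'n. (k \<notin> shapeI \<or> l \<notin> shapeI) \<longrightarrow> M0 k l = 0" by (simp add: M0_def)
    have KI: "Kinv R a m J q = M0"
      unfolding Kinv_def by (rule the_inv_unique[OF finS z left right])
    have "gyro R a m J q i j k = (\<Sum>l\<in>shapeI. M0 k l *
        (m * ((if l = i then a * x $ j / R^3 else 0) - (if l = j then a * x $ i / R^3 else 0))))"
      using gyro_red[OF JJ q i j] KI qq by (simp cong: if_cong)
    also have "\<dots> = (\<Sum>l\<in>shapeI. (if l = i then M0 k i * (m * (a * x $ j / R^3)) else 0)
                     - (if l = j then M0 k j * (m * (a * x $ i / R^3)) else 0))"
      by (intro sum.cong refl) (auto simp: algebra_simps)
    also have "\<dots> = M0 k i * (m * (a * x $ j / R^3)) - M0 k j * (m * (a * x $ i / R^3))"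
      using i j by (simp add: sum_subtractf)
    also have "\<dots> = (- m * a) / (R * (J1 + Jn + m * a\<^sup>2)) *
             (x $ i * (if j = k then 1 else 0) - x $ j * (if i = k then 1 else 0))"
    proof -
      have M0e: "M0 k l = (if k = l then 1/\<alpha> else 0) - \<beta> * x $ k * x $ l / (\<alpha> * D)" if "l \<in> shapeI" for l
        using that k by (simp add: M0_def D_def s_def)
      have canc: "\<beta> * x $ k * x $ i / (\<alpha> * D) * (m * (a * x $ j / R^3)) = \<beta> * x $ k * x $ j / (\<alpha> * D) * (m * (a * x $ i / R^3))"
        by (simp add: algebra_simps)
      have cc: "J1 + Jn + m * a\<^sup>2 = c" by (simp add: c_def)
      show ?thesis
        unfolding M0e[OF i] M0e[OF j] cc using canc al R0 c
        by (auto simp: left_diff_distrib \<alpha>_def field_simps power3_eq_cube power2_eq_square)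
    qed
    finally show "gyro R a m J q i j k = (- m * a) / (R * (J1 + Jn + m * a\<^sup>2)) *
             (fst q $ i * (if j = k then 1 else 0) - fst q $ j * (if i = k then 1 else 0))"
      using qq by simp
  qed
qed
end
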